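(* Let $0\le m\le n$, $x=(x_1,\dots,x_m)$, $y=(y_1,\dots,y_n)$. Then \[\omega(x,y;t)=t^{m(m-n)}(1-t)^m\sum_{\substack{l_1,\dots,l_m=1\\ l_i\ne l_j\ (i\ne j)}}^n\prod_{i=1}^m\frac{y_{l_i}}{x_i-ty_{l_i}}\prod_{\substack{i=1\\ i\ne l_1,\dots,l_m}}^n\prod_{j=1}^m\frac{y_i-ty_{l_j}}{y_i-y_{l_j}}\prod_{1\le i<j\le m}\frac{x_i-y_{l_j}}{x_i-ty_{l_j}}\cdot\frac{y_{l_i}-ty_{l_j}}{y_{l_i}-y_{l_j}}.\]
   Context: For $x=(x_1,\dots,x_m)$ and $y=(y_1,\dots,y_n)$, \[\omega(x,y;t)=\sum_{I\subseteq\{1,\dots,m\}}(-1)^{|I|}t^{\binom{|I|}{2}}\prod_{i\in I,\ j\in\{1,\dots,m\}\setminus I}\frac{x_i-tx_j}{x_i-x_j}\prod_{i\in I}\prod_{j=1}^n\frac{x_i-y_j}{x_i-ty_j}\] (a rational function; $\omega=1$ when $m=0$). *)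

theory Defs
  imports Main "HOL-Library.FuncSet"
begin

definition omega :: "nat \<Rightarrow> nat \<Rightarrow> (nat \<Rightarrow> 'a::field) \<Rightarrow> (nat \<Rightarrow> 'a) \<Rightarrow> 'a \<Rightarrow> 'a" where
  "omega m n x y t =
    (\<Sum>I\<in>Pow {1..m}. (-1) ^ card I * t ^ (card I choose 2)
       * (\<Prod>i\<in>I. \<Prod>j\<in>{1..m} - I. (x i - t * x j) / (x i - x j))
       * (\<Prod>i\<in>I. \<Prod>j\<in>{1..n}. (x i - y j) / (x i - t * y j)))"

end

theory Submission
  imports Defs
begin


definition Om :: "'a::field \<Rightarrow> (nat \<Rightarrow> 'a) \<Rightarrow> nat set \<Rightarrow> ('a \<Rightarrow> 'a) \<Rightarrow> 'a" where
  "Om t x A F = (\<Sum>I\<in>Pow A. (-1) ^ card I * t ^ (card I choose 2)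
       * (\<Prod>i\<in>I. \<Prod>j\<in>A - I. (x i - t * x j) / (x i - x j)) * (\<Prod>i\<in>I. F (x i)))"

definition PP :: "'a::field \<Rightarrow> (nat \<Rightarrow> 'a) \<Rightarrow> nat set \<Rightarrow> nat set \<Rightarrow> 'a" where
  "PP t x A J = (\<Prod>i\<in>J. \<Prod>j\<in>A - J. (x i - t * x j) / (x i - x j))"

lemma pfrac2: fixes r z p q :: "'a::field" assumes "p \<noteq> q" "z \<noteq> p" "z \<noteq> q" shows "r/(z-p)/(z-q) = r/(p-q)*(1/(z-p)) + r/(q-p)*(1/(z-q))"
proof -
  have a: "z - p \<noteq> 0" "z - q \<noteq> 0" "p - q \<noteq> 0" "q - p \<noteq> 0" using assms by auto
  have "r/(p-q)*(1/(z-p)) + r/(q-p)*(1/(z-q)) = r * ((z - q) - (z - p)) / ((p-q)*(z-p)*(z-q))"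
    using a by (simp add: divide_simps) (simp add: algebra_simps)
  also have "\<dots> = r/(z-p)/(z-q)" using a by (simp add: divide_simps)
  finally show ?thesis ..
qed

lemma pf:
  fixes al a b :: "'b \<Rightarrow> 'a::field" and z :: 'a
  assumes "finite N" "inj_on b N" "z \<notin> b ` N"
  shows "(\<Prod>k\<in>N. (al k * z - a k) / (z - b k)) =
    (\<Prod>k\<in>N. al k) + (\<Sum>k\<in>N. (\<Prod>j\<in>N. al j * b k - a j) / (\<Prod>j\<in>N-{k}. b k - b j) / (z - b k))"
  using assms
proof (induction N arbitrary: z rule: finite_induct)
  case empty
  then show ?case by simp
next
  case (insert c N)
  define R where "R k = (\<Prod>j\<in>N. al j * b k - a j) / (\<Prod>j\<in>N-{k}. b k - b j)" for k
  have injN: "inj_on b N" using insert by (auto simp: inj_on_def)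
  have bc: "b c \<notin> b ` N" using insert by (auto simp: inj_on_def)
  have IHz: "(\<Prod>k\<in>N. (al k * z - a k) / (z - b k)) = (\<Prod>k\<in>N. al k) + (\<Sum>k\<in>N. R k / (z - b k))"
    using insert injN by (simp add: R_def)
  have IHc: "(\<Prod>k\<in>N. (al k * b c - a k) / (b c - b k)) = (\<Prod>k\<in>N. al k) + (\<Sum>k\<in>N. R k / (b c - b k))"
    using insert(3)[OF injN bc] by (simp add: R_def)
  have zc: "z \<noteq> b c" using insert by auto
  have zk: "\<And>k. k \<in> N \<Longrightarrow> z \<noteq> b k" using insert by auto
  have ck: "\<And>k. k \<in> N \<Longrightarrow> b c \<noteq> b k" using bc by auto
  have lhs: "(\<Prod>k\<in>insert c N. (al k * z - a k) / (z - b k)) =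
     (al c + (al c * b c - a c) / (z - b c)) * ((\<Prod>k\<in>N. al k) + (\<Sum>k\<in>N. R k / (z - b k)))"
  proof -
    have f: "(al c * z - a c) / (z - b c) = al c + (al c * b c - a c) / (z - b c)"
      using zc by (simp add: field_simps)
    show ?thesis unfolding prod.insert[OF insert(1,2)] f IHz ..
  qed
  have key: "\<And>k. k \<in> N \<Longrightarrow> R k / (z - b k) / (z - b c) = R k / (b k - b c) * (1 / (z - b k)) + R k / (b c - b k) * (1 / (z - b c))"
  proof -
    fix k assume k: "k \<in> N"
    show "?thesis k" using zc zk[OF k] ck[OF k] by (intro pfrac2) auto
  qed
  define D where "D = al c * b c - a c"
  define P where "P = (\<Prod>k\<in>N. al k)"
  define S where "S = (\<Sum>k\<in>N. R k / (z - b k))"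
  define w where "w = z - b c"
  have "S / w = (\<Sum>k\<in>N. R k / (z - b k) / (z - b c))" by (simp add: S_def w_def sum_divide_distrib)
  also have "\<dots> = (\<Sum>k\<in>N. R k / (b k - b c) * (1 / (z - b k)) + R k / (b c - b k) * (1 / (z - b c)))"
    by (rule sum.cong[OF refl key])
  also have "\<dots> = (\<Sum>k\<in>N. R k / (b k - b c) * (1 / (z - b k))) + (\<Sum>k\<in>N. R k / (b c - b k)) * (1 / w)"
    by (simp only: sum.distrib sum_distrib_right w_def)
  finally have Sw: "S / w = (\<Sum>k\<in>N. R k / (b k - b c) * (1 / (z - b k))) + (\<Sum>k\<in>N. R k / (b c - b k)) * (1 / w)" .
  have e1: "(al c + D / w) * (P + S) = al c * P + al c * S + D * P / w + D * (S / w)"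
    by (simp add: algebra_simps add_divide_distrib)
  have e2: "al c * S + D * (\<Sum>k\<in>N. R k / (b k - b c) * (1 / (z - b k))) = (\<Sum>k\<in>N. (al c + D / (b k - b c)) * R k / (z - b k))"
    unfolding S_def sum_distrib_left sum.distrib[symmetric] by (rule sum.cong) (simp_all add: divide_inverse algebra_simps)
  have A: "(\<Prod>k\<in>insert c N. (al k * z - a k) / (z - b k)) =
     al c * P + (\<Sum>k\<in>N. (al c + D / (b k - b c)) * R k / (z - b k))
       + D * (P + (\<Sum>k\<in>N. R k / (b c - b k))) / w"
    unfolding lhs D_def[symmetric] P_def[symmetric] S_def[symmetric] w_def[symmetric] e1 Sw e2[symmetric]
    by (simp add: algebra_simps add_divide_distrib)
  have B: "D * (P + (\<Sum>k\<in>N. R k / (b c - b k))) =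
      (\<Prod>j\<in>insert c N. al j * b c - a j) / (\<Prod>j\<in>insert c N-{c}. b c - b j)"
    using insert(1,2) ck unfolding IHc[symmetric] D_def P_def
    by (simp add: prod_dividef insert_Diff_if)
  have C: "\<And>k. k \<in> N \<Longrightarrow> (al c + D / (b k - b c)) * R k =
      (\<Prod>j\<in>insert c N. al j * b k - a j) / (\<Prod>j\<in>insert c N-{k}. b k - b j)"
  proof -
    fix k assume k: "k \<in> N"
    have "k \<noteq> c" using k insert(2) by auto
    then have "insert c N - {k} = insert c (N - {k})" by auto
    then show "?thesis k" using k insert(1,2) ck[OF k]
      by (simp add: R_def D_def field_simps)
  qed
  have E: "(\<Sum>k\<in>N. (al c + D / (b k - b c)) * R k / (z - b k)) =
     (\<Sum>k\<in>N. (\<Prod>j\<in>insert c N. al j * b k - a j) / (\<Prod>j\<in>insert c N-{k}. b k - b j) / (z - b k))"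
    by (rule sum.cong) (simp_all add: C)
  show ?case unfolding A B w_def E using insert(1,2)
    by (simp add: P_def algebra_simps)
qed


lemma choose2_Suc: "(Suc k choose 2) = (k choose 2) + k"
  using binomial_Suc_Suc[of k 1] by (simp add: numeral_2_eq_2)

lemma prod_insert_inner: "finite B \<Longrightarrow> a \<notin> B \<Longrightarrow> (\<Prod>i\<in>J. \<Prod>j\<in>insert a B. h i j) = (\<Prod>i\<in>J. h i a) * (\<Prod>i\<in>J. \<Prod>j\<in>B. h i j)"
  by (simp add: prod.distrib)

lemma Om_insert:
  fixes t :: "'a::field"
  assumes A: "finite A" and a: "a \<notin> A"
  shows "Om t x (insert a A) F = (\<Sum>J\<in>Pow A. (-1) ^ card J * t ^ (card J choose 2) * PP t x A J * (\<Prod>i\<in>J. F (x i)) *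
      ((\<Prod>i\<in>J. (x i - t * x a) / (x i - x a)) - t ^ card J * F (x a) * (\<Prod>j\<in>A - J. (x a - t * x j) / (x a - x j))))"
proof -
  define g where "g I = (-1) ^ card I * t ^ (card I choose 2)
       * (\<Prod>i\<in>I. \<Prod>j\<in>insert a A - I. (x i - t * x j) / (x i - x j)) * (\<Prod>i\<in>I. F (x i))" for I
  have inj: "inj_on (insert a) (Pow A)" using a by (auto simp: inj_on_def)
  have disj: "Pow A \<inter> insert a ` Pow A = {}" using a by auto
  have "Om t x (insert a A) F = sum g (Pow A) + sum (g \<circ> insert a) (Pow A)"
    unfolding Om_def g_def[abs_def] Pow_insert
    using A by (subst sum.union_disjoint) (auto simp: disj sum.reindex[OF inj])
  also have "\<dots> = (\<Sum>J\<in>Pow A. g J + g (insert a J))" by (simp add: sum.distrib)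
  also have "\<dots> = (\<Sum>J\<in>Pow A. (-1) ^ card J * t ^ (card J choose 2) * PP t x A J * (\<Prod>i\<in>J. F (x i)) *
      ((\<Prod>i\<in>J. (x i - t * x a) / (x i - x a)) - t ^ card J * F (x a) * (\<Prod>j\<in>A - J. (x a - t * x j) / (x a - x j))))"
  proof (rule sum.cong[OF refl])
    fix J assume J: "J \<in> Pow A"
    then have fJ: "finite J" using A finite_subset by auto
    have aJ: "a \<notin> J" using J a by auto
    have d1: "insert a A - J = insert a (A - J)" using aJ by auto
    have d2: "insert a A - insert a J = A - J" using a by auto
    have g1: "g J = (-1) ^ card J * t ^ (card J choose 2) * PP t x A J * (\<Prod>i\<in>J. F (x i)) * (\<Prod>i\<in>J. (x i - t * x a) / (x i - x a))"
      using a unfolding g_def PP_def d1 by (subst prod_insert_inner) (auto simp: A mult_ac)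
    have g2: "g (insert a J) = - ((-1) ^ card J * t ^ (card J choose 2) * PP t x A J * (\<Prod>i\<in>J. F (x i)) * (t ^ card J * F (x a) * (\<Prod>j\<in>A - J. (x a - t * x j) / (x a - x j))))"
      unfolding g_def PP_def d2 using fJ aJ by (simp add: choose2_Suc power_add)
    show "g J + g (insert a J) = (-1) ^ card J * t ^ (card J choose 2) * PP t x A J * (\<Prod>i\<in>J. F (x i)) *
      ((\<Prod>i\<in>J. (x i - t * x a) / (x i - x a)) - t ^ card J * F (x a) * (\<Prod>j\<in>A - J. (x a - t * x j) / (x a - x j)))"
      unfolding g1 g2 by (simp add: algebra_simps)
  qed
  finally show ?thesis .
qed

lemma reidx:
  assumes A: "finite A"
  shows "(\<Sum>J\<in>Pow A. \<Sum>j\<in>A-J. h J j) = (\<Sum>S\<in>Pow A. \<Sum>j\<in>S. h (S-{j}) j)"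
proof -
  have "(\<Sum>J\<in>Pow A. \<Sum>j\<in>A-J. h J j) = (\<Sum>(J,j)\<in>Sigma (Pow A) (\<lambda>J. A - J). h J j)"
    using A by (subst sum.Sigma) auto
  also have "\<dots> = (\<Sum>(S,j)\<in>Sigma (Pow A) (\<lambda>S. S). h (S-{j}) j)"
    by (rule sum.reindex_bij_witness[where j="\<lambda>(J,j). (insert j J, j)" and i="\<lambda>(S,j). (S - {j}, j)"])
       (auto simp: insert_absorb)
  also have "\<dots> = (\<Sum>S\<in>Pow A. \<Sum>j\<in>S. h (S-{j}) j)"
    using A by (subst sum.Sigma) (auto intro: finite_subset)
  finally show ?thesis .
qed

lemma swap_frac: "((a::'a::field) - b) / (c - d) = (b - a) / (d - c)"
  by (metis minus_diff_eq minus_divide_divide)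

lemma prod_frac_step:
  fixes t z :: "'a::field"
  assumes J: "finite J" "inj_on x J" "z \<notin> x ` J"
  shows "(\<Prod>i\<in>J. (x i - t * z) / (x i - z)) - t ^ card J =
     (\<Sum>j\<in>J. (\<Prod>i\<in>J. t * x j - x i) / (\<Prod>i\<in>J-{j}. x j - x i) / (z - x j))"
proof -
  have "(\<Prod>i\<in>J. (x i - t * z) / (x i - z)) = (\<Prod>i\<in>J. ((\<lambda>_. t) i * z - x i) / (z - x i))"
    by (rule prod.cong[OF refl]) (simp add: swap_frac)
  also have "\<dots> = (\<Prod>i\<in>J. t) + (\<Sum>j\<in>J. (\<Prod>i\<in>J. t * x j - x i) / (\<Prod>i\<in>J-{j}. x j - x i) / (z - x j))"
    by (rule pf[OF J])
  finally show ?thesis by simp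
qed

lemma pole_term:
  fixes t z :: "'a::field"
  assumes A: "finite A" and S: "S \<subseteq> A" and j: "j \<in> S"
  shows "(-1) ^ card S * t ^ (card S choose 2) * PP t x A S * (\<Prod>i\<in>S. G (x i)) *
           ((\<Prod>i\<in>S. t * x j - x i) / (\<Prod>i\<in>S-{j}. x j - x i) / (z - x j))
       = (-1) ^ card (S-{j}) * t ^ (card (S-{j}) choose 2) * PP t x A (S-{j}) * (\<Prod>i\<in>S-{j}. G (x i)) * t ^ card (S-{j})
           * (G (x j) * (x j - t * x j) * (\<Prod>i\<in>A-(S-{j})-{j}. (x j - t * x i) / (x j - x i)) / (z - x j))"
proof -
  define J where "J = S - {j}"
  have SJ: "S = insert j J" and jJ: "j \<notin> J" using j by (auto simp: J_def)
  have fJ: "finite J" using A S J_def finite_subset by auto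
  have fAS: "finite (A - S)" using A by auto
  have AJ: "A - J = insert j (A - S)" using S j by (auto simp: J_def)
  have AJj: "A - J - {j} = A - S" using S j by (auto simp: J_def)
  have jAS: "j \<notin> A - S" using j by auto
  define V where "V = (\<Prod>k\<in>A - S. (x j - t * x k) / (x j - x k))"
  define W where "W = (\<Prod>i\<in>J. \<Prod>k\<in>A - S. (x i - t * x k) / (x i - x k))"
  define U1 where "U1 = (\<Prod>i\<in>J. t * x j - x i)"
  define U2 where "U2 = (\<Prod>i\<in>J. x j - x i)"
  define Ph where "Ph = (\<Prod>i\<in>J. G (x i))"
  have PPS: "PP t x A S = V * W" unfolding PP_def V_def W_def
    using fJ jJ by (simp add: SJ)
  have PPJ: "PP t x A J = U1 / U2 * W"
  proof -
    have "PP t x A J = (\<Prod>i\<in>J. (x i - t * x j) / (x i - x j)) * W"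
      unfolding PP_def AJ W_def by (rule prod_insert_inner[OF fAS jAS])
    also have "(\<Prod>i\<in>J. (x i - t * x j) / (x i - x j)) = U1 / U2"
      unfolding U1_def U2_def prod_dividef[symmetric] by (rule prod.cong[OF refl]) (simp add: swap_frac)
    finally show ?thesis .
  qed
  have QS: "(\<Prod>i\<in>S. t * x j - x i) = (t * x j - x j) * U1" unfolding SJ U1_def using fJ jJ by simp
  have QS2: "(\<Prod>i\<in>S-{j}. x j - x i) = U2" unfolding U2_def J_def ..
  have PhS: "(\<Prod>i\<in>S. G (x i)) = G (x j) * Ph" unfolding SJ Ph_def using fJ jJ by simp
  have cS: "card S = Suc (card J)" unfolding SJ using fJ jJ by simp
  show ?thesis
    unfolding J_def[symmetric] AJj PPS PPJ QS QS2 PhS cS V_def[symmetric] Ph_def[symmetric] U2_def[symmetric]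
    by (simp add: choose2_Suc power_add divide_inverse algebra_simps)
qed

lemma pole_cancel:
  fixes t z :: "'a::field"
  assumes A: "finite A" and inj: "inj_on x A" and z: "z \<notin> x ` A"
  shows "(\<Sum>J\<in>Pow A. (-1) ^ card J * t ^ (card J choose 2) * PP t x A J * (\<Prod>i\<in>J. G (x i)) *
            ((\<Prod>i\<in>J. (x i - t * z) / (x i - z)) - t ^ card J))
       = (\<Sum>J\<in>Pow A. (-1) ^ card J * t ^ (card J choose 2) * PP t x A J * (\<Prod>i\<in>J. G (x i)) * t ^ card J
           * (\<Sum>j\<in>A-J. G (x j) * (x j - t * x j) * (\<Prod>i\<in>A-J-{j}. (x j - t * x i) / (x j - x i)) / (z - x j)))"
proof -
  define h where "h J j = (-1) ^ card J * t ^ (card J choose 2) * PP t x A J * (\<Prod>i\<in>J. G (x i)) * t ^ card J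
           * (G (x j) * (x j - t * x j) * (\<Prod>i\<in>A-J-{j}. (x j - t * x i) / (x j - x i)) / (z - x j))" for J j
  have "(\<Sum>J\<in>Pow A. (-1) ^ card J * t ^ (card J choose 2) * PP t x A J * (\<Prod>i\<in>J. G (x i)) *
            ((\<Prod>i\<in>J. (x i - t * z) / (x i - z)) - t ^ card J))
     = (\<Sum>S\<in>Pow A. \<Sum>j\<in>S. h (S-{j}) j)"
  proof (rule sum.cong[OF refl])
    fix S assume S: "S \<in> Pow A"
    have fS: "finite S" using S A finite_subset by auto
    have iS: "inj_on x S" using S inj inj_on_subset by auto
    have zS: "z \<notin> x ` S" using S z by auto
    show "(-1) ^ card S * t ^ (card S choose 2) * PP t x A S * (\<Prod>i\<in>S. G (x i)) *
            ((\<Prod>i\<in>S. (x i - t * z) / (x i - z)) - t ^ card S) = (\<Sum>j\<in>S. h (S-{j}) j)"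
      unfolding prod_frac_step[OF fS iS zS] sum_distrib_left
      apply (rule sum.cong[OF refl])
      apply (unfold h_def)
      apply (rule pole_term[OF A])
      using S by auto
  qed
  also have "\<dots> = (\<Sum>J\<in>Pow A. \<Sum>j\<in>A-J. h J j)" by (rule reidx[OF A, symmetric])
  also have "\<dots> = (\<Sum>J\<in>Pow A. (-1) ^ card J * t ^ (card J choose 2) * PP t x A J * (\<Prod>i\<in>J. G (x i)) * t ^ card J
           * (\<Sum>j\<in>A-J. G (x j) * (x j - t * x j) * (\<Prod>i\<in>A-J-{j}. (x j - t * x i) / (x j - x i)) / (z - x j)))"
    unfolding h_def sum_distrib_left ..
  finally show ?thesis .
qed

definition FB :: "'a::field \<Rightarrow> (nat \<Rightarrow> 'a) \<Rightarrow> nat set \<Rightarrow> 'a \<Rightarrow> 'a" where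
  "FB t y B z = (\<Prod>k\<in>B. (z - y k) / (z - t * y k))"

lemma FK_pf:
  fixes t z :: "'a::field"
  assumes B: "finite B" and K: "finite K" and t: "t \<noteq> 0" and iy: "inj_on y B" and ix: "inj_on x K"
    and sep: "\<forall>i\<in>K. \<forall>k\<in>B. x i \<noteq> t * y k" and zx: "z \<notin> x ` K" and zy: "\<forall>k\<in>B. z \<noteq> t * y k"
  shows "FB t y B z * (\<Prod>i\<in>K. (z - t * x i) / (z - x i)) = 1
     + (\<Sum>k\<in>B. ((\<Prod>n\<in>B. t * y k - y n) / (\<Prod>n\<in>B-{k}. t * y k - t * y n)) * ((\<Prod>i\<in>K. t * y k - t * x i) / (\<Prod>i\<in>K. t * y k - x i)) / (z - t * y k))
     + (\<Sum>j\<in>K. FB t y B (x j) * ((\<Prod>i\<in>K. x j - t * x i) / (\<Prod>i\<in>K-{j}. x j - x i)) / (z - x j))"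
proof -
  define N where "N = B <+> K"
  define aa where "aa = case_sum y (\<lambda>i. t * x i)"
  define bb where "bb = case_sum (\<lambda>k. t * y k) x"
  have fN: "finite N" using B K by (simp add: N_def)
  have ib: "inj_on bb N"
  proof (rule inj_onI)
    fix u v assume u: "u \<in> N" and v: "v \<in> N" and e: "bb u = bb v"
    show "u = v"
    proof (cases u)
      case (Inl k)
      with u have k: "k \<in> B" by (auto simp: N_def)
      show ?thesis
      proof (cases v)
        case (Inl k')
        with v have k': "k' \<in> B" by (auto simp: N_def)
        from e have "y k = y k'" using t by (simp add: bb_def \<open>u = Inl k\<close> \<open>v = Inl k'\<close>)
        then show ?thesis using inj_onD[OF iy _ k k'] \<open>u = Inl k\<close> \<open>v = Inl k'\<close> by simp
      next
        case (Inr i)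
        with v have i: "i \<in> K" by (auto simp: N_def)
        from e have "x i = t * y k" by (simp add: bb_def \<open>u = Inl k\<close> Inr)
        then show ?thesis using sep i k by auto
      qed
    next
      case (Inr i)
      with u have i: "i \<in> K" by (auto simp: N_def)
      show ?thesis
      proof (cases v)
        case (Inl k)
        with v have k: "k \<in> B" by (auto simp: N_def)
        from e have "x i = t * y k" by (simp add: bb_def Inl \<open>u = Inr i\<close>)
        then show ?thesis using sep i k by auto
      next
        case (Inr i')
        with v have i': "i' \<in> K" by (auto simp: N_def)
        from e have "x i = x i'" by (simp add: bb_def \<open>u = Inr i\<close> Inr)
        then show ?thesis using inj_onD[OF ix _ i i'] \<open>u = Inr i\<close> Inr by simp
      qed
    qed
  qed
  have zb: "z \<notin> bb ` N" unfolding N_def bb_def using zx zy by auto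
  have P: "(\<Prod>n\<in>N. ((\<lambda>_. 1) n * z - aa n) / (z - bb n)) = (\<Prod>n\<in>N. (\<lambda>_. 1::'a) n) +
     (\<Sum>k\<in>N. (\<Prod>j\<in>N. (\<lambda>_. 1) j * bb k - aa j) / (\<Prod>j\<in>N-{k}. bb k - bb j) / (z - bb k))"
    by (rule pf[OF fN ib zb])
  have L: "(\<Prod>n\<in>N. ((\<lambda>_. 1) n * z - aa n) / (z - bb n)) = FB t y B z * (\<Prod>i\<in>K. (z - t * x i) / (z - x i))"
    unfolding N_def prod.Plus[OF B K] FB_def by (simp add: aa_def bb_def comp_def)
  have NL: "\<And>k. N - {Inl k} = (B - {k}) <+> K" unfolding N_def by auto
  have NR: "\<And>j. N - {Inr j} = B <+> (K - {j})" unfolding N_def by auto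
  have R: "(\<Sum>k\<in>N. (\<Prod>j\<in>N. (\<lambda>_. 1) j * bb k - aa j) / (\<Prod>j\<in>N-{k}. bb k - bb j) / (z - bb k)) =
     (\<Sum>k\<in>B. ((\<Prod>n\<in>B. t * y k - y n) / (\<Prod>n\<in>B-{k}. t * y k - t * y n)) * ((\<Prod>i\<in>K. t * y k - t * x i) / (\<Prod>i\<in>K. t * y k - x i)) / (z - t * y k))
     + (\<Sum>j\<in>K. FB t y B (x j) * ((\<Prod>i\<in>K. x j - t * x i) / (\<Prod>i\<in>K-{j}. x j - x i)) / (z - x j))"
  proof -
    have fB: "finite (B - {k})" for k using B by auto
    have fK: "finite (K - {j})" for j using K by auto
    show ?thesis
      unfolding N_def sum.Plus[OF B K] NL[unfolded N_def] NR[unfolded N_def] comp_def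
        prod.Plus[OF B K] prod.Plus[OF fB K] prod.Plus[OF B fK]
    proof (intro arg_cong2[where f="(+)"] sum.cong refl)
      fix k assume k: "k \<in> B"
      show "((\<Prod>n\<in>B. 1 * bb (Inl k) - aa (Inl n)) * (\<Prod>n\<in>K. 1 * bb (Inl k) - aa (Inr n))) /
          ((\<Prod>n\<in>B - {k}. bb (Inl k) - bb (Inl n)) * (\<Prod>n\<in>K. bb (Inl k) - bb (Inr n))) / (z - bb (Inl k)) =
         (\<Prod>n\<in>B. t * y k - y n) / (\<Prod>n\<in>B - {k}. t * y k - t * y n) *
          ((\<Prod>i\<in>K. t * y k - t * x i) / (\<Prod>i\<in>K. t * y k - x i)) / (z - t * y k)"
        by (simp add: aa_def bb_def)
    next
      fix j assume j: "j \<in> K"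
      show "((\<Prod>n\<in>B. 1 * bb (Inr j) - aa (Inl n)) * (\<Prod>n\<in>K. 1 * bb (Inr j) - aa (Inr n))) /
          ((\<Prod>n\<in>B. bb (Inr j) - bb (Inl n)) * (\<Prod>n\<in>K - {j}. bb (Inr j) - bb (Inr n))) / (z - bb (Inr j)) =
         FB t y B (x j) * ((\<Prod>i\<in>K. x j - t * x i) / (\<Prod>i\<in>K-{j}. x j - x i)) / (z - x j)"
        by (simp add: aa_def bb_def FB_def prod_dividef)
    qed
  qed
  show ?thesis using P unfolding L R by (simp add: N_def)
qed

lemma FB_remove: "finite B \<Longrightarrow> k \<in> B \<Longrightarrow> FB t y B u = (u - y k) / (u - t * y k) * FB t y (B - {k}) u"
  unfolding FB_def by (rule prod.remove)

lemma star:
  fixes t :: "'a::field"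
  assumes A: "finite A" and a: "a \<notin> A" and B: "finite B" and t: "t \<noteq> 0"
    and ix: "inj_on x (insert a A)" and iy: "inj_on y B"
    and sep: "\<forall>i\<in>insert a A. \<forall>k\<in>B. x i \<noteq> t * y k"
  shows "Om t x (insert a A) (FB t y B) = (\<Sum>k\<in>B. - (t ^ card A * ((\<Prod>n\<in>B. t * y k - y n) / (\<Prod>n\<in>B-{k}. t * y k - t * y n))
      * (\<Prod>j\<in>A. (x j - y k) / (x j - t * y k)) / (x a - t * y k)) * Om t x A (FB t y (B-{k})))"
proof -
  define z where "z = x a"
  define F where "F = FB t y B"
  define cc where "cc J = (-1) ^ card J * t ^ (card J choose 2) * PP t x A J" for J
  define rr where "rr k = (\<Prod>n\<in>B. t * y k - y n) / (\<Prod>n\<in>B-{k}. t * y k - t * y n)" for k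
  define fk where "fk k u = (u - y k) / (u - t * y k)" for k u
  define coef where "coef k = - (t ^ card A * rr k * (\<Prod>j\<in>A. fk k (x j)) / (z - t * y k))" for k
  define Res1 where "Res1 J k = rr k * ((\<Prod>i\<in>A-J. t * y k - t * x i) / (\<Prod>i\<in>A-J. t * y k - x i))" for J k
  define R2 where "R2 J j = F (x j) * (x j - t * x j) * (\<Prod>i\<in>A-J-{j}. (x j - t * x i) / (x j - x i)) / (z - x j)" for J j
  have ixA: "inj_on x A" using ix by (auto simp: inj_on_def)
  have zA: "z \<notin> x ` A" using ix a by (auto simp: z_def inj_on_def)
  have L1: "Om t x (insert a A) F = (\<Sum>J\<in>Pow A. cc J * (\<Prod>i\<in>J. F (x i)) *
      ((\<Prod>i\<in>J. (x i - t * z) / (x i - z)) - t ^ card J))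
      - (\<Sum>J\<in>Pow A. cc J * (\<Prod>i\<in>J. F (x i)) * t ^ card J * (F z * (\<Prod>j\<in>A - J. (z - t * x j) / (z - x j)) - 1))"
    unfolding Om_insert[OF A a] sum_subtractf[symmetric] cc_def z_def
    by (rule sum.cong[OF refl]) (simp add: algebra_simps)
  have L2: "(\<Sum>J\<in>Pow A. cc J * (\<Prod>i\<in>J. F (x i)) * ((\<Prod>i\<in>J. (x i - t * z) / (x i - z)) - t ^ card J))
     = (\<Sum>J\<in>Pow A. cc J * (\<Prod>i\<in>J. F (x i)) * t ^ card J * (\<Sum>j\<in>A-J. R2 J j))"
    unfolding cc_def R2_def by (rule pole_cancel[OF A ixA zA])
  have PFJ: "F z * (\<Prod>j\<in>A - J. (z - t * x j) / (z - x j)) - 1 = (\<Sum>k\<in>B. Res1 J k / (z - t * y k)) + (\<Sum>j\<in>A-J. R2 J j)"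
    if J: "J \<in> Pow A" for J
  proof -
    have fK: "finite (A - J)" using A by auto
    have ixK: "inj_on x (A - J)" using ixA by (auto simp: inj_on_def)
    have sepK: "\<forall>i\<in>A-J. \<forall>k\<in>B. x i \<noteq> t * y k" using sep by auto
    have zK: "z \<notin> x ` (A - J)" using zA by auto
    have zy: "\<forall>k\<in>B. z \<noteq> t * y k" using sep by (auto simp: z_def)
    have e: "(\<Sum>j\<in>A-J. FB t y B (x j) * ((\<Prod>i\<in>A-J. x j - t * x i) / (\<Prod>i\<in>A-J-{j}. x j - x i)) / (z - x j))
        = (\<Sum>j\<in>A-J. R2 J j)"
    proof (rule sum.cong[OF refl])
      fix j assume j: "j \<in> A - J"
      have "(\<Prod>i\<in>A-J. x j - t * x i) = (x j - t * x j) * (\<Prod>i\<in>A-J-{j}. x j - t * x i)"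
        using j fK by (simp add: prod.remove)
      then show "FB t y B (x j) * ((\<Prod>i\<in>A-J. x j - t * x i) / (\<Prod>i\<in>A-J-{j}. x j - x i)) / (z - x j) = R2 J j"
        by (simp add: R2_def F_def prod_dividef)
    qed
    show ?thesis
      unfolding F_def FK_pf[OF B fK t iy ixK sepK zK zy] e
      by (simp add: Res1_def rr_def)
  qed
  have per: "- (t ^ card J * (\<Prod>i\<in>J. F (x i)) * (Res1 J k / (z - t * y k))) = coef k * (\<Prod>i\<in>J. FB t y (B-{k}) (x i))"
    if J: "J \<in> Pow A" and k: "k \<in> B" for J k
  proof -
    have fJ: "finite J" using J A finite_subset by auto
    have fK: "finite (A - J)" using A by auto
    have Phi: "(\<Prod>i\<in>J. F (x i)) = (\<Prod>i\<in>J. fk k (x i)) * (\<Prod>i\<in>J. FB t y (B-{k}) (x i))"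
      unfolding F_def fk_def prod.distrib[symmetric] by (rule prod.cong[OF refl]) (rule FB_remove[OF B k])
    have splitA: "(\<Prod>j\<in>A. fk k (x j)) = (\<Prod>j\<in>J. fk k (x j)) * (\<Prod>j\<in>A-J. fk k (x j))"
      using J A by (metis PowD prod.subset_diff mult.commute)
    have cA: "card A = card J + card (A - J)"
      using J A by (metis PowD card_Diff_subset card_mono add_diff_inverse_nat finite_subset not_less)
    have t1: "(\<Prod>i\<in>A-J. t * y k - t * x i) = t ^ card (A - J) * (\<Prod>i\<in>A-J. y k - x i)"
    proof -
      have "(\<Prod>i\<in>A-J. t * y k - t * x i) = (\<Prod>i\<in>A-J. t * (y k - x i))"
        by (rule prod.cong[OF refl]) (simp add: algebra_simps)
      also have "\<dots> = t ^ card (A - J) * (\<Prod>i\<in>A-J. y k - x i)" by (simp add: prod.distrib)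
      finally show ?thesis .
    qed
    have t2: "(\<Prod>i\<in>A-J. y k - x i) / (\<Prod>i\<in>A-J. t * y k - x i) = (\<Prod>i\<in>A-J. fk k (x i))"
      unfolding fk_def prod_dividef[symmetric] by (rule prod.cong[OF refl]) (simp add: swap_frac)
    have Rk: "Res1 J k = rr k * (t ^ card (A - J) * (\<Prod>i\<in>A-J. fk k (x i)))"
      unfolding Res1_def t1 t2[symmetric] by (simp add: times_divide_eq_left)
    show ?thesis
      unfolding Phi coef_def splitA cA Rk power_add
      by (simp add: algebra_simps)
  qed
  have "Om t x (insert a A) (FB t y B) = (\<Sum>J\<in>Pow A. cc J * (\<Prod>i\<in>J. F (x i)) * t ^ card J * (\<Sum>j\<in>A-J. R2 J j))
     - (\<Sum>J\<in>Pow A. cc J * (\<Prod>i\<in>J. F (x i)) * t ^ card J * ((\<Sum>k\<in>B. Res1 J k / (z - t * y k)) + (\<Sum>j\<in>A-J. R2 J j)))"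
    unfolding F_def[symmetric] L1 L2 by (intro arg_cong2[where f="(-)"] refl sum.cong) (simp add: PFJ)
  also have "\<dots> = (\<Sum>J\<in>Pow A. cc J * (- (t ^ card J * (\<Prod>i\<in>J. F (x i)) * (\<Sum>k\<in>B. Res1 J k / (z - t * y k)))))"
    unfolding sum_subtractf[symmetric] by (rule sum.cong[OF refl]) (simp add: algebra_simps)
  also have "\<dots> = (\<Sum>J\<in>Pow A. cc J * (\<Sum>k\<in>B. coef k * (\<Prod>i\<in>J. FB t y (B-{k}) (x i))))"
    by (rule sum.cong[OF refl]) (simp add: sum_distrib_left per[symmetric] sum_negf)
  also have "\<dots> = (\<Sum>k\<in>B. coef k * Om t x A (FB t y (B-{k})))"
    unfolding Om_def sum_distrib_left
    by (subst sum.swap) (intro sum.cong refl, simp add: cc_def PP_def algebra_simps)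
  finally show ?thesis by (simp add: coef_def rr_def fk_def z_def)
qed


lemma coef_id:
  fixes t :: "'a::field"
  assumes t: "t \<noteq> 0" and B: "finite B" and k: "k \<in> B"
  shows "- (t ^ m * ((\<Prod>n\<in>B. t * y k - y n) / (\<Prod>n\<in>B-{k}. t * y k - t * y n))) * t powi (int m * (int m - int (card (B-{k}))))
     = t powi (int (Suc m) * (int (Suc m) - int (card B))) * ((1 - t) * y k * (\<Prod>j\<in>B-{k}. (y j - t * y k) / (y j - y k)))"
proof -
  define c where "c = card B"
  have c1: "c \<ge> 1" using B k by (simp add: c_def Suc_le_eq card_gt_0_iff) blast
  have cB: "card (B - {k}) = c - 1" using B k by (simp add: c_def)
  have p1: "(\<Prod>n\<in>B. t * y k - y n) = (t * y k - y k) * (\<Prod>n\<in>B-{k}. t * y k - y n)"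
    using B k by (rule prod.remove)
  have p2: "(\<Prod>n\<in>B-{k}. t * y k - t * y n) = t ^ (c - 1) * (\<Prod>n\<in>B-{k}. y k - y n)"
  proof -
    have "(\<Prod>n\<in>B-{k}. t * y k - t * y n) = (\<Prod>n\<in>B-{k}. t * (y k - y n))"
      by (rule prod.cong[OF refl]) (simp add: algebra_simps)
    also have "\<dots> = t ^ (c - 1) * (\<Prod>n\<in>B-{k}. y k - y n)" by (simp add: prod.distrib cB)
    finally show ?thesis .
  qed
  have p3: "(\<Prod>n\<in>B-{k}. t * y k - y n) / (\<Prod>n\<in>B-{k}. y k - y n) = (\<Prod>j\<in>B-{k}. (y j - t * y k) / (y j - y k))"
    unfolding prod_dividef[symmetric] by (rule prod.cong[OF refl]) (simp add: swap_frac)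
  have ex: "int m * (int m - int (c - 1)) = int (Suc m) * (int (Suc m) - int c) + int (c - 1) - int m"
    using c1 by (simp add: of_nat_diff algebra_simps)
  have pw: "t powi (int m * (int m - int (c - 1))) = t powi (int (Suc m) * (int (Suc m) - int c)) * t ^ (c - 1) / t ^ m"
    unfolding ex using t by (simp add: power_int_diff power_int_add)
  have "- (t ^ m * ((\<Prod>n\<in>B. t * y k - y n) / (\<Prod>n\<in>B-{k}. t * y k - t * y n))) * t powi (int m * (int m - int (card (B-{k}))))
     = - (t ^ m * ((t * y k - y k) * ((\<Prod>n\<in>B-{k}. t * y k - y n) / (\<Prod>n\<in>B-{k}. y k - y n)) / t ^ (c - 1)))
       * (t powi (int (Suc m) * (int (Suc m) - int c)) * t ^ (c - 1) / t ^ m)"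
    unfolding p1 p2 cB pw by (simp add: field_simps)
  also have "\<dots> = t powi (int (Suc m) * (int (Suc m) - int c)) * ((1 - t) * y k * (\<Prod>j\<in>B-{k}. (y j - t * y k) / (y j - y k)))"
    unfolding p3 using t by (simp add: field_simps)
  finally show ?thesis by (simp add: c_def)
qed


definition SI :: "nat \<Rightarrow> nat set \<Rightarrow> (nat \<Rightarrow> nat) set" where
  "SI m B = {l \<in> {1..m} \<rightarrow>\<^sub>E B. inj_on l {1..m}}"

lemma finite_SI: "finite B \<Longrightarrow> finite (SI m B)"
  unfolding SI_def by (rule finite_subset[OF _ finite_PiE[of "{1..m}" "\<lambda>_. B"]]) auto

lemma SI_upd:
  assumes k: "k \<in> B" and l: "l \<in> SI m (B - {k})"
  shows "l(Suc m := k) \<in> SI (Suc m) B"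
proof -
  from l have lP: "l \<in> {1..m} \<rightarrow>\<^sub>E B - {k}" and li: "inj_on l {1..m}" by (auto simp: SI_def)
  have e: "{1..Suc m} = insert (Suc m) {1..m}" by auto
  have P: "l(Suc m := k) \<in> {1..Suc m} \<rightarrow>\<^sub>E B"
    using lP k unfolding PiE_iff extensional_def by auto
  have "inj_on (l(Suc m := k)) {1..m}" using li by (rule inj_on_cong[THEN iffD1, rotated]) auto
  moreover have "k \<notin> l ` {1..m}" using lP by auto
  ultimately have "inj_on (l(Suc m := k)) {1..Suc m}" unfolding e by (simp add: inj_on_insert)
  with P show ?thesis by (simp add: SI_def)
qed

lemma SI_res:
  assumes b: "b \<in> SI (Suc m) B"
  shows "b (Suc m) \<in> B" "b(Suc m := undefined) \<in> SI m (B - {b (Suc m)})"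
proof -
  from b have bP: "b \<in> {1..Suc m} \<rightarrow>\<^sub>E B" and bi: "inj_on b {1..Suc m}" by (auto simp: SI_def)
  show "b (Suc m) \<in> B" using bP by auto
  have ne: "b i \<noteq> b (Suc m)" if "i \<in> {1..m}" for i
    using inj_onD[OF bi, of i "Suc m"] that by auto
  have P: "b(Suc m := undefined) \<in> {1..m} \<rightarrow>\<^sub>E B - {b (Suc m)}"
    using bP ne unfolding PiE_iff extensional_def by auto
  have "inj_on b {1..m}" using bi by (rule inj_on_subset) auto
  then have "inj_on (b(Suc m := undefined)) {1..m}" by (rule inj_on_cong[THEN iffD1, rotated]) auto
  with P show "b(Suc m := undefined) \<in> SI m (B - {b (Suc m)})" by (simp add: SI_def)
qed

lemma SI_Suc:
  assumes B: "finite B"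
  shows "(\<Sum>l\<in>SI (Suc m) B. G l) = (\<Sum>k\<in>B. \<Sum>l\<in>SI m (B-{k}). G (l(Suc m := k)))"
proof -
  have "(\<Sum>k\<in>B. \<Sum>l\<in>SI m (B-{k}). G (l(Suc m := k))) = (\<Sum>(k,l)\<in>Sigma B (\<lambda>k. SI m (B-{k})). G (l(Suc m := k)))"
    using B by (subst sum.Sigma) (auto intro: finite_SI)
  also have "\<dots> = (\<Sum>l\<in>SI (Suc m) B. G l)"
  proof (rule sum.reindex_bij_witness[where j="\<lambda>(k,l). l(Suc m := k)" and i="\<lambda>l. (l (Suc m), l(Suc m := undefined))"])
    fix a assume "a \<in> Sigma B (\<lambda>k. SI m (B-{k}))"
    then obtain k l where a: "a = (k, l)" "k \<in> B" "l \<in> SI m (B - {k})" by auto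
    then have "l (Suc m) = undefined" by (auto simp: SI_def PiE_def extensional_def)
    then show "(\<lambda>l. (l (Suc m), l(Suc m := undefined))) ((\<lambda>(k, l). l(Suc m := k)) a) = a"
      using a by auto
    show "(\<lambda>(k, l). l(Suc m := k)) a \<in> SI (Suc m) B"
      using a SI_upd by auto
  next
    fix b assume b: "b \<in> SI (Suc m) B"
    show "(\<lambda>(k, l). l(Suc m := k)) ((\<lambda>l. (l (Suc m), l(Suc m := undefined))) b) = b" by auto
    show "(\<lambda>l. (l (Suc m), l(Suc m := undefined))) b \<in> Sigma B (\<lambda>k. SI m (B-{k}))"
      using SI_res[OF b] by auto
  next
    fix a assume "a \<in> Sigma B (\<lambda>k. SI m (B-{k}))"
    show "G ((\<lambda>(k, l). l(Suc m := k)) a) = (case a of (k, l) \<Rightarrow> G (l(Suc m := k)))"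
      by (auto split: prod.splits)
  qed
  finally show ?thesis ..
qed

definition Yt :: "'a::field \<Rightarrow> (nat \<Rightarrow> 'a) \<Rightarrow> (nat \<Rightarrow> 'a) \<Rightarrow> nat \<Rightarrow> nat set \<Rightarrow> (nat \<Rightarrow> nat) \<Rightarrow> 'a" where
  "Yt t x y m B l = (\<Prod>i\<in>{1..m}. y (l i) / (x i - t * y (l i)))
     * (\<Prod>i\<in>B - l ` {1..m}. \<Prod>j\<in>{1..m}. (y i - t * y (l j)) / (y i - y (l j)))
     * (\<Prod>i\<in>{1..m}. \<Prod>j\<in>{i<..m}.
          (x i - y (l j)) / (x i - t * y (l j)) * ((y (l i) - t * y (l j)) / (y (l i) - y (l j))))"

lemma Yt_Suc:
  assumes B: "finite B" and k: "k \<in> B" and l: "l \<in> SI m (B - {k})"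
  shows "Yt t x y (Suc m) B (l(Suc m := k)) = Yt t x y m (B-{k}) l * (y k / (x (Suc m) - t * y k))
     * (\<Prod>j\<in>B-{k}. (y j - t * y k) / (y j - y k)) * (\<Prod>i\<in>{1..m}. (x i - y k) / (x i - t * y k))"
proof -
  define L where "L = l(Suc m := k)"
  define g where "g i p = (y i - t * y p) / (y i - y p)" for i p
  define h where "h i p = (x i - y p) / (x i - t * y p)" for i p
  from l have lP: "l \<in> {1..m} \<rightarrow>\<^sub>E B - {k}" and li: "inj_on l {1..m}" by (auto simp: SI_def)
  have e: "{1..Suc m} = insert (Suc m) {1..m}" by auto
  have nm: "Suc m \<notin> {1..m}" by auto
  have Lo: "\<And>i. i \<in> {1..m} \<Longrightarrow> L i = l i" by (auto simp: L_def)
  have Lm: "L (Suc m) = k" by (simp add: L_def)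
  have Y1: "(\<Prod>i\<in>{1..Suc m}. y (L i) / (x i - t * y (L i))) = y k / (x (Suc m) - t * y k) * (\<Prod>i\<in>{1..m}. y (l i) / (x i - t * y (l i)))"
    unfolding e by (simp add: Lm Lo nm)
  have img: "B - L ` {1..Suc m} = (B - {k}) - l ` {1..m}"
    unfolding e using Lo Lm by auto
  have Y2: "(\<Prod>i\<in>B - L ` {1..Suc m}. \<Prod>j\<in>{1..Suc m}. g i (L j)) =
      (\<Prod>i\<in>(B - {k}) - l ` {1..m}. \<Prod>j\<in>{1..m}. g i (l j)) * (\<Prod>i\<in>(B - {k}) - l ` {1..m}. g i k)"
  proof -
    have "(\<Prod>i\<in>(B - {k}) - l ` {1..m}. \<Prod>j\<in>{1..Suc m}. g i (L j)) = (\<Prod>i\<in>(B - {k}) - l ` {1..m}. g i k * (\<Prod>j\<in>{1..m}. g i (l j)))"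
      by (rule prod.cong[OF refl]) (simp add: e Lm Lo nm)
    then show ?thesis unfolding img by (simp only: prod.distrib mult.commute)
  qed
  have inner: "(\<Prod>j\<in>{i<..Suc m}. h i (L j) * g (L i) (L j)) = (\<Prod>j\<in>{i<..m}. h i (l j) * g (l i) (l j)) * (h i k * g (l i) k)"
    if i: "i \<in> {1..m}" for i
  proof -
    have e2: "{i<..Suc m} = insert (Suc m) {i<..m}" using i by auto
    have "\<And>j. j \<in> {i<..m} \<Longrightarrow> L j = l j" using i by (auto simp: L_def)
    then show ?thesis unfolding e2 using i by (simp add: Lm Lo mult.commute)
  qed
  have Y3: "(\<Prod>i\<in>{1..Suc m}. \<Prod>j\<in>{i<..Suc m}. h i (L j) * g (L i) (L j)) =
     (\<Prod>i\<in>{1..m}. \<Prod>j\<in>{i<..m}. h i (l j) * g (l i) (l j)) * (\<Prod>i\<in>{1..m}. h i k) * (\<Prod>i\<in>{1..m}. g (l i) k)"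
  proof -
    have "(\<Prod>i\<in>{1..Suc m}. \<Prod>j\<in>{i<..Suc m}. h i (L j) * g (L i) (L j)) = (\<Prod>i\<in>{1..m}. \<Prod>j\<in>{i<..Suc m}. h i (L j) * g (L i) (L j))"
      unfolding e using nm by simp
    also have "\<dots> = (\<Prod>i\<in>{1..m}. (\<Prod>j\<in>{i<..m}. h i (l j) * g (l i) (l j)) * (h i k * g (l i) k))"
      by (rule prod.cong[OF refl]) (rule inner)
    finally show ?thesis by (simp add: prod.distrib mult.assoc)
  qed
  have split: "(\<Prod>j\<in>B-{k}. g j k) = (\<Prod>i\<in>(B - {k}) - l ` {1..m}. g i k) * (\<Prod>i\<in>{1..m}. g (l i) k)"
  proof -
    have sub: "l ` {1..m} \<subseteq> B - {k}" using lP by auto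
    have "(\<Prod>j\<in>B-{k}. g j k) = (\<Prod>i\<in>(B - {k}) - l ` {1..m}. g i k) * (\<Prod>i\<in>l ` {1..m}. g i k)"
      using B sub by (metis finite_Diff prod.subset_diff)
    also have "(\<Prod>i\<in>l ` {1..m}. g i k) = (\<Prod>i\<in>{1..m}. g (l i) k)"
      using li by (simp add: prod.reindex)
    finally show ?thesis .
  qed
  show ?thesis
    unfolding Yt_def L_def[symmetric] g_def[symmetric] h_def[symmetric] Y1 Y2 Y3 split
    by (simp add: mult_ac)
qed

definition RHSg :: "'a::field \<Rightarrow> (nat \<Rightarrow> 'a) \<Rightarrow> (nat \<Rightarrow> 'a) \<Rightarrow> nat \<Rightarrow> nat set \<Rightarrow> 'a" where
  "RHSg t x y m B = t powi (int m * (int m - int (card B))) * (1 - t) ^ m * (\<Sum>l\<in>SI m B. Yt t x y m B l)"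

lemma main_gen:
  fixes t :: "'a::field"
  assumes t: "t \<noteq> 0"
  shows "finite B \<Longrightarrow> m \<le> card B \<Longrightarrow> inj_on x {1..m} \<Longrightarrow> inj_on y B \<Longrightarrow> (\<forall>i\<in>{1..m}. \<forall>k\<in>B. x i \<noteq> t * y k)
    \<Longrightarrow> Om t x {1..m} (FB t y B) = RHSg t x y m B"
proof (induction m arbitrary: B)
  case 0
  have SI0: "SI 0 B = {\<lambda>_. undefined}" by (simp add: SI_def)
  show ?case by (simp add: Om_def RHSg_def SI0 Yt_def binomial_eq_0)
next
  case (Suc m)
  note B = Suc.prems(1)
  have e: "{1..Suc m} = insert (Suc m) {1..m}" by auto
  have ixS: "inj_on x (insert (Suc m) {1..m})" using Suc.prems(3) e by simp
  have sepS: "\<forall>i\<in>insert (Suc m) {1..m}. \<forall>k\<in>B. x i \<noteq> t * y k" using Suc.prems(5) e by simp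
  define rr where "rr k = (\<Prod>n\<in>B. t * y k - y n) / (\<Prod>n\<in>B-{k}. t * y k - t * y n)" for k
  define H where "H k = (\<Prod>j\<in>{1..m}. (x j - y k) / (x j - t * y k))" for k
  define Gk where "Gk k = (\<Prod>j\<in>B-{k}. (y j - t * y k) / (y j - y k))" for k
  define d where "d k = x (Suc m) - t * y k" for k
  define S where "S k = (\<Sum>l\<in>SI m (B-{k}). Yt t x y m (B-{k}) l)" for k
  have "Om t x {1..Suc m} (FB t y B) = (\<Sum>k\<in>B. - (t ^ m * rr k * H k / d k) * Om t x {1..m} (FB t y (B-{k})))"
    unfolding e by (subst star[OF _ _ B t ixS Suc.prems(4) sepS]) (simp_all add: rr_def H_def d_def)
  also have "\<dots> = (\<Sum>k\<in>B. - (t ^ m * rr k * H k / d k) * RHSg t x y m (B-{k}))"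
  proof (rule sum.cong[OF refl])
    fix k assume k: "k \<in> B"
    have "Om t x {1..m} (FB t y (B-{k})) = RHSg t x y m (B-{k})"
    proof (rule Suc.IH)
      show "finite (B - {k})" using B by simp
      show "m \<le> card (B - {k})" using Suc.prems(2) k B by simp
      show "inj_on x {1..m}" using Suc.prems(3) by (rule inj_on_subset) auto
      show "inj_on y (B - {k})" using Suc.prems(4) by (rule inj_on_subset) auto
      show "\<forall>i\<in>{1..m}. \<forall>ka\<in>B - {k}. x i \<noteq> t * y ka" using Suc.prems(5) by auto
    qed
    then show "- (t ^ m * rr k * H k / d k) * Om t x {1..m} (FB t y (B-{k})) = - (t ^ m * rr k * H k / d k) * RHSg t x y m (B-{k})"
      by simp
  qed
  also have "\<dots> = (\<Sum>k\<in>B. t powi (int (Suc m) * (int (Suc m) - int (card B))) * (1 - t) ^ Suc m * (S k * (y k / d k * Gk k * H k)))"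
  proof (rule sum.cong[OF refl])
    fix k assume k: "k \<in> B"
    have c: "- (t ^ m * rr k) * t powi (int m * (int m - int (card (B-{k})))) = t powi (int (Suc m) * (int (Suc m) - int (card B))) * ((1 - t) * y k * Gk k)"
      unfolding rr_def Gk_def by (rule coef_id[OF t B k])
    have "- (t ^ m * rr k * H k / d k) * RHSg t x y m (B-{k}) = (- (t ^ m * rr k) * t powi (int m * (int m - int (card (B-{k}))))) * (H k / d k * (1 - t) ^ m * S k)"
      unfolding RHSg_def S_def by (simp add: algebra_simps)
    also have "\<dots> = t powi (int (Suc m) * (int (Suc m) - int (card B))) * (1 - t) ^ Suc m * (S k * (y k / d k * Gk k * H k))"
      unfolding c by (simp add: algebra_simps)
    finally show "- (t ^ m * rr k * H k / d k) * RHSg t x y m (B-{k}) = t powi (int (Suc m) * (int (Suc m) - int (card B))) * (1 - t) ^ Suc m * (S k * (y k / d k * Gk k * H k))" .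
  qed
  also have "\<dots> = RHSg t x y (Suc m) B"
  proof -
    have "(\<Sum>l\<in>SI (Suc m) B. Yt t x y (Suc m) B l) = (\<Sum>k\<in>B. \<Sum>l\<in>SI m (B-{k}). Yt t x y (Suc m) B (l(Suc m := k)))"
      by (rule SI_Suc[OF B])
    also have "\<dots> = (\<Sum>k\<in>B. S k * (y k / d k * Gk k * H k))"
    proof (rule sum.cong[OF refl])
      fix k assume k: "k \<in> B"
      show "(\<Sum>l\<in>SI m (B-{k}). Yt t x y (Suc m) B (l(Suc m := k))) = S k * (y k / d k * Gk k * H k)"
        unfolding S_def sum_distrib_right
        by (rule sum.cong[OF refl]) (simp add: Yt_Suc[OF B k] d_def Gk_def H_def mult_ac)
    qed
    finally show ?thesis unfolding RHSg_def by (simp add: sum_distrib_left)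
  qed
  finally show ?case .
qed

theorem corollary3p5:
  fixes m n :: nat and x y :: "nat \<Rightarrow> 'a::field" and t :: 'a
  assumes "m \<le> n"
    and "t \<noteq> 0"
    and "inj_on x {1..m}"
    and "inj_on y {1..n}"
    and "\<forall>i\<in>{1..m}. \<forall>j\<in>{1..n}. x i \<noteq> t * y j"
  shows "omega m n x y t =
    t powi (int m * (int m - int n)) * (1 - t) ^ m *
    (\<Sum>l\<in>{l\<in>{1..m} \<rightarrow>\<^sub>E {1..n}. inj_on l {1..m}}.
       (\<Prod>i\<in>{1..m}. y (l i) / (x i - t * y (l i)))
     * (\<Prod>i\<in>{1..n} - l ` {1..m}. \<Prod>j\<in>{1..m}. (y i - t * y (l j)) / (y i - y (l j)))
     * (\<Prod>i\<in>{1..m}. \<Prod>j\<in>{i<..m}.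
          (x i - y (l j)) / (x i - t * y (l j)) * ((y (l i) - t * y (l j)) / (y (l i) - y (l j)))))"
  proof -
  have L: "omega m n x y t = Om t x {1..m} (FB t y {1..n})"
    unfolding omega_def Om_def FB_def ..
  have R: "Om t x {1..m} (FB t y {1..n}) = RHSg t x y m {1..n}"
    by (rule main_gen[OF assms(2)]) (use assms in auto)
  show ?thesis unfolding L R RHSg_def SI_def Yt_def by simp
qed

end
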